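(* Assume the setting described in the context, with vertex polynomials $p_1,\dots,p_{2^m}$. Then: (i) $\Psi^-$ is initially positive if and only if every $p_i$ is initially positive; (ii) $\Psi^+$ is initially positive if and only if at least one $p_i$ is initially positive; (iii) there exists $\kappa\ge0$ with $\Psi^-(\kappa)<0$ if and only if there exist $\kappa\ge 0$ and an index $i$ with $p_i(\kappa)<0$; (iv) there exists $\kappa\ge0$ with $\Psi^+(\kappa)<0$ if and only if there exists $\kappa\ge0$ with $p_i(\kappa)<0$ for all $i$.
   Context: Let $n,m\ge 1$, $B\in\mathbb{Z}^{n\times m}$, $C\in\mathbb{Z}^{m\times n}$, and $J_2,J_4\in\mathbb{R}^{n\times n}$ symmetric. Given bounds $0\le \Delta_j^-\le \Delta_j^+<\infty$ ($j=1,\dots,m$), $\mathcal{D}$ is the set of diagonal matrices $\Delta=\mathrm{diag}(\Delta_1,\dots,\Delta_m)$ with $\Delta_j^-\le\Delta_j\le\Delta_j^+$. For real $\kappa\ge0$, $\Psi^-(\kappa)=\min_{\Delta\in\mathcal{D}}\det[-(B\Delta C+\kappa^2J_2+\kappa^4J_4)]$ and $\Psi^+(\kappa)=\max_{\Delta\in\mathcal{D}}\det[-(B\Delta C+\kappa^2J_2+\kappa^4J_4)]$. Let $\Delta^{(1)},\dots,\Delta^{(2^m)}$ be the vertices of $\mathcal{D}$ (all $\Delta_j\in\{\Delta_j^-,\Delta_j^+\}$) and $p_i(\kappa)=\det[-(B\Delta^{(i)}C+\kappa^2J_2+\kappa^4J_4)]$. A function $f$ on $[0,\infty)$ is initially positive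 if there is $\hat\kappa>0$ with $f(\kappa)>0$ for all $\kappa\in(0,\hat\kappa)$. *)

theory Defs
  imports "HOL-Analysis.Analysis"
begin

definition diag_set :: "('m::finite \<Rightarrow> real) \<Rightarrow> ('m \<Rightarrow> real) \<Rightarrow> (real^'m^'m) set" where
  "diag_set lo hi = {\<Delta>. (\<forall>i j. i \<noteq> j \<longrightarrow> \<Delta> $ i $ j = 0) \<and> (\<forall>j. lo j \<le> \<Delta> $ j $ j \<and> \<Delta> $ j $ j \<le> hi j)}"

definition vertex_set :: "('m::finite \<Rightarrow> real) \<Rightarrow> ('m \<Rightarrow> real) \<Rightarrow> (real^'m^'m) set" where
  "vertex_set lo hi = {\<Delta> \<in> diag_set lo hi. \<forall>j. \<Delta> $ j $ j = lo j \<or> \<Delta> $ j $ j = hi j}"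

definition detfun :: "real^'m^'n \<Rightarrow> real^'n^'m \<Rightarrow> real^'n^'n \<Rightarrow> real^'n^'n
    \<Rightarrow> real^'m^'m \<Rightarrow> real \<Rightarrow> real" where
  "detfun B C J2 J4 \<Delta> \<kappa> = det (- (B ** \<Delta> ** C + (\<kappa>^2) *\<^sub>R J2 + (\<kappa>^4) *\<^sub>R J4))"

text \<open>Psi^- and Psi^+ (the min / max are attained since D is compact and det is continuous).\<close>
definition Psi_minus :: "real^'m^'n \<Rightarrow> real^'n^'m \<Rightarrow> real^'n^'n \<Rightarrow> real^'n^'n
    \<Rightarrow> ('m::finite \<Rightarrow> real) \<Rightarrow> ('m \<Rightarrow> real) \<Rightarrow> real \<Rightarrow> real" where
  "Psi_minus B C J2 J4 lo hi \<kappa> = Inf ((\<lambda>\<Delta>. detfun B C J2 J4 \<Delta> \<kappa>) ` diag_set lo hi)"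

definition Psi_plus :: "real^'m^'n \<Rightarrow> real^'n^'m \<Rightarrow> real^'n^'n \<Rightarrow> real^'n^'n
    \<Rightarrow> ('m::finite \<Rightarrow> real) \<Rightarrow> ('m \<Rightarrow> real) \<Rightarrow> real \<Rightarrow> real" where
  "Psi_plus B C J2 J4 lo hi \<kappa> = Sup ((\<lambda>\<Delta>. detfun B C J2 J4 \<Delta> \<kappa>) ` diag_set lo hi)"

definition initially_positive :: "(real \<Rightarrow> real) \<Rightarrow> bool" where
  "initially_positive f \<longleftrightarrow> (\<exists>k>0. \<forall>\<kappa>. 0 < \<kappa> \<and> \<kappa> < k \<longrightarrow> f \<kappa> > 0)"

end

theory Submission imports Defs "HOL-Computational_Algebra.Polynomial" begin

lemma rank1_det:
  fixes r :: "'n::finite \<Rightarrow> real^'n" and u :: "'n \<Rightarrow> real" and v :: "real^'n"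
  assumes "finite S"
  shows "det (\<chi> i. if i \<in> S then r i + (t * u i) *s v else r i) =
         det (\<chi> i. r i) + t * (\<Sum>k\<in>S. u k * det (\<chi> i. if i = k then v else r i))"
  using assms
proof (induction S arbitrary: r rule: finite_induct)
  case empty
  then show ?case by simp
next
  case (insert k S)
  define r' where "r' = r(k := r k + (t * u k) *s v)"
  have eq1: "(\<chi> i. if i \<in> insert k S then r i + (t * u i) *s v else r i)
      = (\<chi> i. if i \<in> S then r' i + (t * u i) *s v else r' i)"
    using insert.hyps by (auto simp: r'_def intro!: vec_eq_iff[THEN iffD2])
  have d1: "det (\<chi> i. r' i) = det (\<chi> i. r i) + t * (u k * det (\<chi> i. if i = k then v else r i))"
  proof -
    have "(\<chi> i. r' i) = (\<chi> i. if i = k then r i + (t * u k) *s v else r i)"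
      by (auto simp: r'_def intro!: vec_eq_iff[THEN iffD2])
    also have "det \<dots> = det (\<chi> i. if i = k then r i else r i) + det (\<chi> i. if i = k then (t * u k) *s v else r i)"
      by (rule det_row_add)
    also have "det (\<chi> i. if i = k then (t * u k) *s v else r i) = (t * u k) * det (\<chi> i. if i = k then v else r i)"
      by (rule det_row_mul)
    finally show ?thesis by simp
  qed
  have d2: "det (\<chi> i. if i = j then v else r' i) = det (\<chi> i. if i = j then v else r i)" if "j \<in> S" for j
  proof -
    have jk: "k \<noteq> j" using that insert.hyps by auto
    define A where "A = (\<chi> i. if i = j then v else r i)"
    have "det (\<chi> x. if x = k then row k A + (t * u k) *s row j A else row x A) = det A"
      by (rule det_row_operation[OF jk])
    moreover have "(\<chi> x. if x = k then row k A + (t * u k) *s row j A else row x A) = (\<chi> i. if i = j then v else r' i)"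
      using jk by (auto simp: A_def r'_def row_def intro!: vec_eq_iff[THEN iffD2])
    ultimately show ?thesis by (simp add: A_def)
  qed
  show ?case
    unfolding eq1 insert.IH d1 using insert.hyps d2
    by (simp add: algebra_simps)
qed


definition upd :: "real^'m^'m \<Rightarrow> 'm::finite \<Rightarrow> real \<Rightarrow> real^'m^'m" where
  "upd D k t = (\<chi> a b. if a = k \<and> b = k then t else D$a$b)"

lemma mult_upd:
  fixes B :: "real^'m::finite^'n::finite" and C :: "real^'n^'m"
  shows "(B ** upd D k t ** C) $ i $ l = (B ** upd D k 0 ** C) $ i $ l + t * B$i$k * C$k$l"
proof -
  have e: "upd D k t $ a $ b = upd D k 0 $ a $ b + (if a = k \<and> b = k then t else 0)" for a b
    by (simp add: upd_def)
  have "(B ** upd D k t ** C) $ i $ l = (\<Sum>b\<in>UNIV. (\<Sum>a\<in>UNIV. B$i$a * upd D k t $ a $ b) * C$b$l)"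
    by (simp add: matrix_matrix_mult_def)
  also have "\<dots> = (\<Sum>b\<in>UNIV. (\<Sum>a\<in>UNIV. B$i$a * upd D k 0 $ a $ b) * C$b$l)
       + (\<Sum>b\<in>UNIV. (\<Sum>a\<in>UNIV. B$i$a * (if a = k \<and> b = k then t else 0)) * C$b$l)"
    unfolding e by (simp add: distrib_left distrib_right sum.distrib)
  also have "(\<Sum>b\<in>UNIV. (\<Sum>a\<in>UNIV. B$i$a * (if a = k \<and> b = k then t else 0)) * C$b$l) = t * B$i$k * C$k$l"
  proof -
    have "(\<Sum>a\<in>UNIV. B$i$a * (if a = k \<and> b = k then t else 0)) = (if b = k then B$i$k * t else 0)" for b
    proof (cases "b = k")
      case True
      have "(\<Sum>a\<in>UNIV. B$i$a * (if a = k \<and> b = k then t else 0)) = (\<Sum>a\<in>UNIV. if a = k then B$i$a * t else 0)"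
        using True by (intro sum.cong) auto
      also have "\<dots> = B$i$k * t" by simp
      finally show ?thesis using True by simp
    qed simp
    then have "(\<Sum>b\<in>UNIV. (\<Sum>a\<in>UNIV. B$i$a * (if a = k \<and> b = k then t else 0)) * C$b$l)
       = (\<Sum>b\<in>UNIV. if b = k then B$i$k * t * C$b$l else 0)"
      by (intro sum.cong) auto
    also have "\<dots> = B$i$k * t * C$k$l" by simp
    finally show ?thesis by simp
  qed
  finally show ?thesis by (simp add: matrix_matrix_mult_def)
qed

lemma detfun_affine:
  fixes B :: "real^'m::finite^'n::finite" and C :: "real^'n^'m"
  shows "\<exists>\<alpha> \<beta>. \<forall>t. detfun B C J2 J4 (upd D k t) \<kappa> = \<alpha> + t * \<beta>"
proof -
  define X where "X = (\<kappa>^2) *\<^sub>R J2 + (\<kappa>^4) *\<^sub>R J4"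
  define r where "r i = row i (- (B ** upd D k 0 ** C + X))" for i
  define u where "u i = - B$i$k" for i
  define v where "v = row k C"
  have m: "- (B ** upd D k t ** C + X) = (\<chi> i. if i \<in> UNIV then r i + (t * u i) *s v else r i)" for t
  proof (rule vec_eq_iff[THEN iffD2], rule allI, rule vec_eq_iff[THEN iffD2], rule allI)
    fix i l
    have "(- (B ** upd D k t ** C + X)) $ i $ l = - ((B ** upd D k t ** C) $ i $ l + X $ i $ l)" by simp
    also have "\<dots> = - ((B ** upd D k 0 ** C) $ i $ l + X $ i $ l) + t * u i * v $ l"
      by (subst mult_upd) (simp add: u_def v_def row_def)
    also have "\<dots> = (\<chi> i. if i \<in> UNIV then r i + (t * u i) *s v else r i) $ i $ l"
      by (simp add: r_def row_def)
    finally show "(- (B ** upd D k t ** C + X)) $ i $ l = (\<chi> i. if i \<in> UNIV then r i + (t * u i) *s v else r i) $ i $ l" .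
  qed
  have "detfun B C J2 J4 (upd D k t) \<kappa> = det (\<chi> i. if i \<in> UNIV then r i + (t * u i) *s v else r i)" for t
    unfolding detfun_def m[symmetric] X_def by (simp add: add.assoc)
  note A = this
  have R: "det (\<chi> i. if i \<in> UNIV then r i + (t * u i) *s v else r i) =
         det (\<chi> i. r i) + t * (\<Sum>k\<in>UNIV. u k * det (\<chi> i. if i = k then v else r i))" for t
    by (rule rank1_det) simp
  show ?thesis
    by (rule exI[of _ "det (\<chi> i. r i)"], rule exI[of _ "\<Sum>k\<in>UNIV. u k * det (\<chi> i. if i = k then v else r i)"])
       (intro allI, subst A, rule R)
qed



lemma upd_self: "upd D k (D$k$k) = D"
  by (auto simp: upd_def intro!: vec_eq_iff[THEN iffD2])

lemma vertex_min_aux: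
  fixes F :: "real^'m::finite^'m \<Rightarrow> real"
  assumes aff: "\<And>D k. \<exists>\<alpha> \<beta>. \<forall>t. F (upd D k t) = \<alpha> + t * \<beta>"
    and lohi: "\<forall>j. lo j \<le> hi j"
    and fin: "finite S"
  shows "\<forall>\<Delta>. \<Delta> \<in> diag_set lo hi \<and> (\<forall>j. j \<notin> S \<longrightarrow> \<Delta>$j$j = lo j \<or> \<Delta>$j$j = hi j)
           \<longrightarrow> (\<exists>V\<in>vertex_set lo hi. F V \<le> F \<Delta>)"
  using fin
proof (induction S rule: finite_induct)
  case empty
  then show ?case by (auto simp: vertex_set_def)
next
  case (insert k S)
  show ?case
  proof (intro allI impI)
    fix \<Delta> assume H: "\<Delta> \<in> diag_set lo hi \<and> (\<forall>j. j \<notin> insert k S \<longrightarrow> \<Delta>$j$j = lo j \<or> \<Delta>$j$j = hi j)"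
    obtain \<alpha> \<beta> where ab: "\<And>t. F (upd \<Delta> k t) = \<alpha> + t * \<beta>" using aff by blast
    define ts where "ts = (if \<beta> \<ge> 0 then lo k else hi k)"
    have bnd: "lo k \<le> \<Delta>$k$k" "\<Delta>$k$k \<le> hi k" using H by (auto simp: diag_set_def)
    have "\<alpha> + ts * \<beta> \<le> \<alpha> + \<Delta>$k$k * \<beta>"
      using bnd by (auto simp: ts_def intro: mult_right_mono mult_right_mono_neg)
    then have le: "F (upd \<Delta> k ts) \<le> F \<Delta>"
      using ab[of ts] ab[of "\<Delta>$k$k"] upd_self[of \<Delta> k] by simp
    have tsb: "lo k \<le> ts" "ts \<le> hi k" using lohi by (auto simp: ts_def)
    have mem: "upd \<Delta> k ts \<in> diag_set lo hi"
      using H tsb by (auto simp: diag_set_def upd_def)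
    have vert: "\<forall>j. j \<notin> S \<longrightarrow> upd \<Delta> k ts $j$j = lo j \<or> upd \<Delta> k ts $j$j = hi j"
      using H by (auto simp: upd_def ts_def)
    obtain V where "V \<in> vertex_set lo hi" "F V \<le> F (upd \<Delta> k ts)"
      using insert.IH mem vert by blast
    then show "\<exists>V\<in>vertex_set lo hi. F V \<le> F \<Delta>" using le by (meson order_trans)
  qed
qed

lemma vertex_min:
  fixes F :: "real^'m::finite^'m \<Rightarrow> real"
  assumes aff: "\<And>D k. \<exists>\<alpha> \<beta>. \<forall>t. F (upd D k t) = \<alpha> + t * \<beta>"
    and lohi: "\<forall>j. lo j \<le> hi j"
    and "\<Delta> \<in> diag_set lo hi"
  shows "\<exists>V\<in>vertex_set lo hi. F V \<le> F \<Delta>"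
  using vertex_min_aux[OF aff lohi, of UNIV] assms(3) by simp

definition ispoly :: "(real \<Rightarrow> real) \<Rightarrow> bool" where
  "ispoly f \<longleftrightarrow> (\<exists>p. \<forall>x. f x = poly p x)"

lemma ispoly_const: "ispoly (\<lambda>x. c)"
  unfolding ispoly_def by (rule exI[of _ "[:c:]"]) simp

lemma ispoly_id: "ispoly (\<lambda>x. x)"
  unfolding ispoly_def by (rule exI[of _ "[:0, 1:]"]) simp

lemma ispoly_add: "ispoly f \<Longrightarrow> ispoly g \<Longrightarrow> ispoly (\<lambda>x. f x + g x)"
  unfolding ispoly_def by (metis poly_add)

lemma ispoly_mult: "ispoly f \<Longrightarrow> ispoly g \<Longrightarrow> ispoly (\<lambda>x. f x * g x)"
  unfolding ispoly_def by (metis poly_mult)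

lemma ispoly_minus: "ispoly f \<Longrightarrow> ispoly (\<lambda>x. - f x)"
  unfolding ispoly_def by (metis poly_minus)

lemma ispoly_power: "ispoly f \<Longrightarrow> ispoly (\<lambda>x. f x ^ n)"
  unfolding ispoly_def by (metis poly_power)

lemma ispoly_sum: "finite S \<Longrightarrow> (\<And>i. i \<in> S \<Longrightarrow> ispoly (f i)) \<Longrightarrow> ispoly (\<lambda>x. \<Sum>i\<in>S. f i x)"
  by (induction S rule: finite_induct) (auto intro: ispoly_const ispoly_add)

lemma ispoly_prod: "finite S \<Longrightarrow> (\<And>i. i \<in> S \<Longrightarrow> ispoly (f i)) \<Longrightarrow> ispoly (\<lambda>x. \<Prod>i\<in>S. f i x)"
  by (induction S rule: finite_induct) (auto intro: ispoly_const ispoly_mult)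

lemma detfun_poly:
  fixes B :: "real^'m::finite^'n::finite" and C :: "real^'n^'m"
  shows "ispoly (detfun B C J2 J4 \<Delta>)"
proof -
  define M where "M = B ** \<Delta> ** C"
  have e: "detfun B C J2 J4 \<Delta> = (\<lambda>\<kappa>. \<Sum>p\<in>{p. p permutes (UNIV::'n set)}. of_int (sign p) *
      (\<Prod>i\<in>UNIV. - (M$i$p i) - \<kappa>^2 * J2$i$p i - \<kappa>^4 * J4$i$p i))"
    by (simp add: fun_eq_iff detfun_def det_def M_def algebra_simps)
  have ent: "ispoly (\<lambda>x. - (M$i$j) - x^2 * J2$i$j - x^4 * J4$i$j)" for i j
  proof -
    have "ispoly (\<lambda>x. (- (M$i$j) + (- J2$i$j) * x^2) + (- J4$i$j) * x^4)"
      by (intro ispoly_add ispoly_mult ispoly_const ispoly_power ispoly_id)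
    then show ?thesis by (simp add: algebra_simps)
  qed
  show ?thesis unfolding e
    by (intro ispoly_sum ispoly_prod ispoly_mult ispoly_const ent finite_permutations finite) 
qed

lemma poly_sign_near0:
  fixes p :: "real poly"
  shows "\<exists>\<epsilon>>0. (\<forall>x. 0 < x \<and> x < \<epsilon> \<longrightarrow> poly p x > 0) \<or> (\<forall>x. 0 < x \<and> x < \<epsilon> \<longrightarrow> poly p x \<le> 0)"
proof (cases "p = 0")
  case True
  then show ?thesis by (intro exI[of _ 1]) auto
next
  case False
  define R where "R = {x. poly p x = 0 \<and> x > 0}"
  have fR: "finite R" using poly_roots_finite[OF False] unfolding R_def
    by (rule finite_subset[rotated]) auto
  define e where "e = Min (insert 1 R)"
  have epos: "e > 0" using fR by (auto simp: e_def R_def)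
  have noroot: "poly p x \<noteq> 0" if "0 < x" "x < e" for x
  proof
    assume "poly p x = 0"
    then have "x \<in> R" using that by (auto simp: R_def)
    then have "e \<le> x" using fR by (auto simp: e_def)
    then show False using that by simp
  qed
  show ?thesis
  proof (cases "poly p (e/2) > 0")
    case True
    have "poly p x > 0" if "0 < x" "x < e" for x
    proof (rule ccontr)
      assume "\<not> poly p x > 0"
      then have neg: "poly p x < 0" using noroot[OF that] by linarith
      consider "x < e/2" | "x = e/2" | "x > e/2" by linarith
      then show False
      proof cases
        case 1
        then obtain y where "x < y" "y < e/2" "poly p y = 0" using poly_IVT_pos[OF 1 neg True] by blast
        then show False using noroot[of y] that by auto
      next
        case 2 then show False using True neg by (simp only: 2)
      next
        case 3
        then obtain y where "e/2 < y" "y < x" "poly p y = 0" using poly_IVT_neg[OF 3 True neg] by blast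
        then show False using noroot[of y] that epos by auto
      qed
    qed
    then show ?thesis using epos by blast
  next
    case False
    have "poly p x \<le> 0" if "0 < x" "x < e" for x
    proof (rule ccontr)
      assume "\<not> poly p x \<le> 0"
      then have pos: "poly p x > 0" by linarith
      have neg: "poly p (e/2) < 0" using noroot[of "e/2"] False epos by force
      consider "x < e/2" | "x = e/2" | "x > e/2" by linarith
      then show False
      proof cases
        case 1
        then obtain y where "x < y" "y < e/2" "poly p y = 0" using poly_IVT_neg[OF 1 pos neg] by blast
        then show False using noroot[of y] that by auto
      next
        case 2 then show False using pos neg by (simp only: 2)
      next
        case 3
        then obtain y where "e/2 < y" "y < x" "poly p y = 0" using poly_IVT_pos[OF 3 neg pos] by blast
        then show False using noroot[of y] that epos by auto
      qed
    qed
    then show ?thesis using epos by blast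
  qed
qed


theorem proposition2:
  fixes B :: "real^'m::finite^'n::finite" and C :: "real^'n^'m"
    and J2 J4 :: "real^'n^'n" and lo hi :: "'m \<Rightarrow> real"
  assumes "\<forall>i j. B $ i $ j \<in> \<int>" and "\<forall>i j. C $ i $ j \<in> \<int>"
    and "transpose J2 = J2" and "transpose J4 = J4"
    and "\<forall>j. 0 \<le> lo j \<and> lo j \<le> hi j"
  shows "(initially_positive (Psi_minus B C J2 J4 lo hi) \<longleftrightarrow>
            (\<forall>\<Delta>\<in>vertex_set lo hi. initially_positive (detfun B C J2 J4 \<Delta>)))
       \<and> (initially_positive (Psi_plus B C J2 J4 lo hi) \<longleftrightarrow>
            (\<exists>\<Delta>\<in>vertex_set lo hi. initially_positive (detfun B C J2 J4 \<Delta>)))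
       \<and> ((\<exists>\<kappa>\<ge>0. Psi_minus B C J2 J4 lo hi \<kappa> < 0) \<longleftrightarrow>
            (\<exists>\<kappa>\<ge>0. \<exists>\<Delta>\<in>vertex_set lo hi. detfun B C J2 J4 \<Delta> \<kappa> < 0))
       \<and> ((\<exists>\<kappa>\<ge>0. Psi_plus B C J2 J4 lo hi \<kappa> < 0) \<longleftrightarrow>
            (\<exists>\<kappa>\<ge>0. \<forall>\<Delta>\<in>vertex_set lo hi. detfun B C J2 J4 \<Delta> \<kappa> < 0))"
proof -
  define f where "f = detfun B C J2 J4"
  define V where "V = vertex_set lo hi"
  have lohi: "\<forall>j. lo j \<le> hi j" using assms(5) by blast
  have finV: "finite V"
  proof (rule finite_subset)
    show "V \<subseteq> range (\<lambda>s::'m \<Rightarrow> bool. (\<chi> a b. if a = b then (if s a then hi a else lo a) else 0) :: real^'m^'m)"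
    proof
      fix D assume "D \<in> V"
      then have D: "\<forall>i j. i \<noteq> j \<longrightarrow> D$i$j = 0" "\<forall>j. D$j$j = lo j \<or> D$j$j = hi j"
        by (auto simp: V_def vertex_set_def diag_set_def)
      have "D = (\<chi> a b. if a = b then (if D$a$a = hi a then hi a else lo a) else 0)"
        using D by (auto intro!: vec_eq_iff[THEN iffD2])
      then show "D \<in> range (\<lambda>s::'m \<Rightarrow> bool. (\<chi> a b. if a = b then (if s a then hi a else lo a) else 0) :: real^'m^'m)"
        by (rule image_eqI[where x="\<lambda>a. D$a$a = hi a"]) simp_all
    qed
  qed simp
  have neV: "V \<noteq> {}"
  proof -
    have "(\<chi> a b. if a = b then lo a else 0) \<in> V"
      using lohi by (auto simp: V_def vertex_set_def diag_set_def)
    then show ?thesis by blast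
  qed
  have VD: "V \<subseteq> diag_set lo hi" by (auto simp: V_def vertex_set_def)
  have PM: "Psi_minus B C J2 J4 lo hi \<kappa> = Min ((\<lambda>D. f D \<kappa>) ` V)" for \<kappa>
    unfolding Psi_minus_def f_def[symmetric]
  proof (rule cInf_eq_minimum)
    show "Min ((\<lambda>D. f D \<kappa>) ` V) \<in> (\<lambda>D. f D \<kappa>) ` diag_set lo hi"
      using Min_in[of "(\<lambda>D. f D \<kappa>) ` V"] finV neV VD by blast
  next
    fix x assume "x \<in> (\<lambda>D. f D \<kappa>) ` diag_set lo hi"
    then obtain D where D: "D \<in> diag_set lo hi" "x = f D \<kappa>" by blast
    obtain W where "W \<in> V" "f W \<kappa> \<le> f D \<kappa>"
      using vertex_min[of "\<lambda>D. f D \<kappa>", OF _ lohi D(1)] detfun_affine unfolding f_def V_def by blast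
    then show "Min ((\<lambda>D. f D \<kappa>) ` V) \<le> x" using D finV by (meson Min_le finite_imageI image_eqI order_trans)
  qed
  have PP: "Psi_plus B C J2 J4 lo hi \<kappa> = Max ((\<lambda>D. f D \<kappa>) ` V)" for \<kappa>
    unfolding Psi_plus_def f_def[symmetric]
  proof (rule cSup_eq_maximum)
    show "Max ((\<lambda>D. f D \<kappa>) ` V) \<in> (\<lambda>D. f D \<kappa>) ` diag_set lo hi"
      using Max_in[of "(\<lambda>D. f D \<kappa>) ` V"] finV neV VD by blast
  next
    fix x assume "x \<in> (\<lambda>D. f D \<kappa>) ` diag_set lo hi"
    then obtain D where D: "D \<in> diag_set lo hi" "x = f D \<kappa>" by blast
    have aff: "\<exists>\<alpha> \<beta>. \<forall>t. - f (upd E k t) \<kappa> = \<alpha> + t * \<beta>" for E k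
    proof -
      obtain \<alpha> \<beta> where "\<forall>t. f (upd E k t) \<kappa> = \<alpha> + t * \<beta>"
        using detfun_affine unfolding f_def by blast
      then show ?thesis by (intro exI[of _ "-\<alpha>"] exI[of _ "-\<beta>"]) simp
    qed
    obtain W where "W \<in> V" "- f W \<kappa> \<le> - f D \<kappa>"
      using vertex_min[of "\<lambda>D. - f D \<kappa>", OF aff lohi D(1)] unfolding V_def by blast
    then show "x \<le> Max ((\<lambda>D. f D \<kappa>) ` V)" using D finV
      by (metis Max_ge finite_imageI image_eqI neg_le_iff_le order_trans)
  qed
  have P1: "initially_positive (Psi_minus B C J2 J4 lo hi) \<longleftrightarrow> (\<forall>D\<in>V. initially_positive (f D))"
  proof
    assume "initially_positive (Psi_minus B C J2 J4 lo hi)"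
    then obtain k where k: "k > 0" "\<forall>\<kappa>. 0 < \<kappa> \<and> \<kappa> < k \<longrightarrow> Min ((\<lambda>D. f D \<kappa>) ` V) > 0"
      unfolding initially_positive_def PM by blast
    show "\<forall>D\<in>V. initially_positive (f D)"
      unfolding initially_positive_def using k finV neV by (auto simp: Min_gr_iff)
  next
    assume "\<forall>D\<in>V. initially_positive (f D)"
    then obtain K where K: "\<forall>D\<in>V. K D > 0 \<and> (\<forall>\<kappa>. 0 < \<kappa> \<and> \<kappa> < K D \<longrightarrow> f D \<kappa> > 0)"
      unfolding initially_positive_def by metis
    define k where "k = Min (K ` V)"
    have kpos: "k > 0" using K finV neV by (auto simp: k_def Min_gr_iff)
    have "Min ((\<lambda>D. f D \<kappa>) ` V) > 0" if "0 < \<kappa>" "\<kappa> < k" for \<kappa>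
    proof -
      have "\<kappa> < K D" if "D \<in> V" for D using \<open>\<kappa> < k\<close> finV that unfolding k_def by (meson Min_le finite_imageI imageI order_less_le_trans)
      then show ?thesis using K \<open>0 < \<kappa>\<close> finV neV by (auto simp: Min_gr_iff)
    qed
    then show "initially_positive (Psi_minus B C J2 J4 lo hi)"
      unfolding initially_positive_def PM using kpos by blast
  qed
  have P2: "initially_positive (Psi_plus B C J2 J4 lo hi) \<longleftrightarrow> (\<exists>D\<in>V. initially_positive (f D))"
  proof
    assume ip: "initially_positive (Psi_plus B C J2 J4 lo hi)"
    show "\<exists>D\<in>V. initially_positive (f D)"
    proof (rule ccontr)
      assume "\<not> (\<exists>D\<in>V. initially_positive (f D))"
      then have nip: "\<forall>D\<in>V. \<not> initially_positive (f D)" by blast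
      have "\<exists>e>0. \<forall>\<kappa>. 0 < \<kappa> \<and> \<kappa> < e \<longrightarrow> f D \<kappa> \<le> 0" if "D \<in> V" for D
      proof -
        obtain p where p: "\<forall>x. f D x = poly p x" using detfun_poly unfolding ispoly_def f_def by blast
        obtain e where e: "e > 0" "(\<forall>x. 0 < x \<and> x < e \<longrightarrow> poly p x > 0) \<or> (\<forall>x. 0 < x \<and> x < e \<longrightarrow> poly p x \<le> 0)"
          using poly_sign_near0[of p] by blast
        have "\<not> (\<forall>x. 0 < x \<and> x < e \<longrightarrow> poly p x > 0)"
          using nip that e(1) p unfolding initially_positive_def by auto
        then show ?thesis using e p by auto
      qed
      then obtain E where E: "\<forall>D\<in>V. E D > 0 \<and> (\<forall>\<kappa>. 0 < \<kappa> \<and> \<kappa> < E D \<longrightarrow> f D \<kappa> \<le> 0)"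
        by metis
      define e where "e = Min (E ` V)"
      have epos: "e > 0" using E finV neV by (auto simp: e_def Min_gr_iff)
      obtain k where k: "k > 0" "\<forall>\<kappa>. 0 < \<kappa> \<and> \<kappa> < k \<longrightarrow> Max ((\<lambda>D. f D \<kappa>) ` V) > 0"
        using ip unfolding initially_positive_def PP by blast
      define \<kappa> where "\<kappa> = min e k / 2"
      have kp: "0 < \<kappa>" "\<kappa> < k" "\<kappa> < e" using epos k(1) by (auto simp: \<kappa>_def)
      then obtain D where D: "D \<in> V" "f D \<kappa> > 0" using k(2) finV neV by (auto simp: Max_gr_iff)
      have "\<kappa> < E D" using kp(3) D(1) finV unfolding e_def by (meson Min_le finite_imageI imageI order_less_le_trans)
      then show False using E D kp by force
    qed
  next
    assume "\<exists>D\<in>V. initially_positive (f D)"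
    then obtain D k where D: "D \<in> V" "k > 0" "\<forall>\<kappa>. 0 < \<kappa> \<and> \<kappa> < k \<longrightarrow> f D \<kappa> > 0"
      unfolding initially_positive_def by blast
    have "Max ((\<lambda>D. f D \<kappa>) ` V) > 0" if "0 < \<kappa>" "\<kappa> < k" for \<kappa>
      using D that finV neV by (auto simp: Max_gr_iff)
    then show "initially_positive (Psi_plus B C J2 J4 lo hi)"
      unfolding initially_positive_def PP using D(2) by blast
  qed
  have P3: "(\<exists>\<kappa>\<ge>0. Psi_minus B C J2 J4 lo hi \<kappa> < 0) \<longleftrightarrow> (\<exists>\<kappa>\<ge>0. \<exists>D\<in>V. f D \<kappa> < 0)"
    unfolding PM using finV neV by (simp add: Min_less_iff)
  have P4: "(\<exists>\<kappa>\<ge>0. Psi_plus B C J2 J4 lo hi \<kappa> < 0) \<longleftrightarrow> (\<exists>\<kappa>\<ge>0. \<forall>D\<in>V. f D \<kappa> < 0)"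
    unfolding PP using finV neV by (simp add: Max_less_iff)
  show ?thesis using P1 P2 P3 P4 unfolding f_def V_def by blast
qed

end
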